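(* Let $\varphi$ be a SaSTL formula (as defined in the context), let $\omega,\omega'$ be spatio-temporal signals over the same $\mathbb{T}$, $L$ and $X$, and let $t\in\mathbb{T}$, $l\in L$. Write $\|\omega-\omega'\|_\infty=\sup_{t_0\in\mathbb{T},\,l_0\in L,\,x\in X}|\pi_x(\omega)[t_0,l_0]-\pi_x(\omega')[t_0,l_0]|$. If $(\omega,t,l)\models\varphi$ and $\|\omega-\omega'\|_\infty<\rho(\varphi,\omega,t,l)$, then $(\omega',t,l)\models\varphi$.
   Context: Time domain $\mathbb{T}=\mathbb{R}_{\ge 0}$. $L$ is a finite nonempty set of locations. $G=(L,E,\eta)$ is a weighted undirected graph with edge weights $\eta:E\to\mathbb{R}_{\ge0}$; the distance $d(l,l')$ is the minimum, over all paths $\sigma$ between $l$ and $l'$, of $\sum_{e\in\sigma}\eta(e)$ (and $+\infty$ if there is no path). $X=\{x_1,\dots,x_n\}$ is a set of signal variables. A spatio-temporal signal is a function $\omega:\mathbb{T}\times L\to\mathbb{R}^n$; $\pi_{x}(\omega)[t,l]\in\mathbb{R}$ denotes its component for variable $x\in X$ at time $t$ and location $l$. $P$ is a finite set of propositions and $\mathcal{L}:L\to 2^P$ a labeling. Location formulas are $\psi::=\top\mid p\mid\neg\psi\mid\psi\vee\psi$ ($p\in P$), with $\mathcal{L}(l)\models\psi$ defined in the usual propositional way. A spatial domain is $\mathcal{D}=([d_1,d_2],\psi)$ with $0\le d_1\le d_2\le+\infty$. For $l\in L$ let $L^l_{\mathcal{D}}=\{l'\in L: d_1\le d(l,l')\le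 d_2,\ \mathcal{L}(l')\models\psi\}$. Standing assumption: for every spatial domain $\mathcal{D}$ occurring in the formula and every $l\in L$, $L^l_{\mathcal{D}}\neq\emptyset$. Let $\alpha^x_{\mathcal{D}}(\omega,t,l)$ be the (nonempty, finite) multiset $\{\pi_x(\omega)[t,l'] : l'\in L^l_{\mathcal{D}}\}$, and for $\mathrm{op}\in\{\max,\min,\mathrm{sum},\mathrm{avg}\}$ let $\mathrm{op}(\cdot)$ be its maximum, minimum, sum, or arithmetic mean. SaSTL syntax: $\varphi::= x>c \mid \neg\varphi\mid \varphi_1\wedge\varphi_2\mid\varphi_1\vee\varphi_2\mid \varphi_1\,\mathcal{U}_I\,\varphi_2\mid \mathcal{A}^{\mathrm{op}}_{\mathcal{D}}x>c\mid \mathcal{C}^{\mathrm{op}}_{\mathcal{D}}\varphi>c$, where $x\in X$, $c\in\mathbb{R}$, $I\subseteq\mathbb{R}_{>0}$ is a nonempty interval, $\mathrm{op}\in\{\max,\min,\mathrm{sum},\mathrm{avg}\}$. For counting formulas $\mathcal{C}^{\mathrm{op}}_{\mathcal{D}}\varphi>c$ it is assumed that $0\le c<1$ if $\mathrm{op}\in\{\max,\min,\mathrm{avg}\}$ and $0\le c<|L^l_{\mathcal{D}}|$ for all $l\in L$ if $\mathrm{op}=\mathrm{sum}$. Boolean semantics: $(\omega,t,l)\models x>c$ iff $\pi_x(\omega)[t,l]>c$; $\neg,\wedge,\vee$ as usual; $(\omega,t,l)\models\varphi_1\mathcal{U}_I\varphi_2$ iff there is $t'\in(t+I)\cap\mathbb{T}$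 with $(\omega,t',l)\models\varphi_2$ and $(\omega,t'',l)\models\varphi_1$ for all $t''\in(t,t')$ (open interval); $(\omega,t,l)\models\mathcal{A}^{\mathrm{op}}_{\mathcal{D}}x>c$ iff $\mathrm{op}(\alpha^x_{\mathcal{D}}(\omega,t,l))>c$; $(\omega,t,l)\models\mathcal{C}^{\mathrm{op}}_{\mathcal{D}}\varphi>c$ iff $\mathrm{op}(\{g(l'):l'\in L^l_{\mathcal{D}}\})>c$ (multiset), where $g(l')=1$ if $(\omega,t,l')\models\varphi$ and $g(l')=0$ otherwise. Quantitative semantics (robustness, values in $\mathbb{R}\cup\{\pm\infty\}$, with $\inf\emptyset=+\infty$): $\rho(x>c,\omega,t,l)=\pi_x(\omega)[t,l]-c$; $\rho(\neg\varphi)=-\rho(\varphi)$; $\rho(\varphi_1\wedge\varphi_2)=\min\{\rho(\varphi_1),\rho(\varphi_2)\}$; $\rho(\varphi_1\vee\varphi_2)=\max\{\rho(\varphi_1),\rho(\varphi_2)\}$ (all at the same $\omega,t,l$); $\rho(\varphi_1\mathcal{U}_I\varphi_2,\omega,t,l)=\sup_{t'\in(t+I)\cap\mathbb{T}}\min\{\rho(\varphi_2,\omega,t',l),\ \inf_{t''\in(t,t')}\rho(\varphi_1,\omega,t'',l)\}$; $\rho(\mathcal{A}^{\mathrm{sum}}_{\mathcal{D}}x>c,\omega,t,l)=\big(\mathrm{sum}(\alpha^x_{\mathcal{D}}(\omega,t,l))-c\big)/|\alpha^x_{\mathcal{D}}(\omega,t,l)|$ and $\rho(\mathcal{A}^{\mathrm{op}}_{\mathcal{D}}x>c,\omega,t,l)=\mathrm{op}(\alpha^x_{\mathcal{D}}(\omega,t,l))-c$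 for $\mathrm{op}\in\{\max,\min,\mathrm{avg}\}$. For counting, let $R=\{\rho(\varphi,\omega,t,l'):l'\in L^l_{\mathcal{D}}\}$ (multiset) and let $\delta(k,R)$ denote the $k$-th largest element of $R$ counted with multiplicity; then $\rho(\mathcal{C}^{\max}_{\mathcal{D}}\varphi>c)=\max R$, $\rho(\mathcal{C}^{\min}_{\mathcal{D}}\varphi>c)=\min R$, $\rho(\mathcal{C}^{\mathrm{sum}}_{\mathcal{D}}\varphi>c)=\delta(\lfloor c\rfloor+1,R)$, $\rho(\mathcal{C}^{\mathrm{avg}}_{\mathcal{D}}\varphi>c)=\delta(\lfloor c\,|L^l_{\mathcal{D}}|\rfloor+1,R)$. *)

theory Defs
  imports Complex_Main "HOL-Library.Multiset" "HOL-Library.Extended_Real"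
begin

definition is_walk :: "'l set set \<Rightarrow> 'l list \<Rightarrow> bool" where
  "is_walk E vs \<longleftrightarrow> vs \<noteq> [] \<and> (\<forall>i. Suc i < length vs \<longrightarrow> {vs ! i, vs ! Suc i} \<in> E)"

definition walk_weight :: "('l set \<Rightarrow> real) \<Rightarrow> 'l list \<Rightarrow> real" where
  "walk_weight eta vs = (\<Sum>i<length vs - 1. eta {vs ! i, vs ! Suc i})"

text \<open>Graph distance: minimum total weight over all paths between l and l', +infinity if none.\<close>
definition graph_dist :: "'l set set \<Rightarrow> ('l set \<Rightarrow> real) \<Rightarrow> 'l \<Rightarrow> 'l \<Rightarrow> ereal" where
  "graph_dist E eta l l' =
     (INF vs \<in> {vs. is_walk E vs \<and> hd vs = l \<and> last vs = l'}. ereal (walk_weight eta vs))"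

definition undirected_weighted_graph :: "'l set set \<Rightarrow> ('l set \<Rightarrow> real) \<Rightarrow> bool" where
  "undirected_weighted_graph E eta \<longleftrightarrow>
     (\<forall>e\<in>E. \<exists>u v. e = {u, v}) \<and> (\<forall>e\<in>E. eta e \<ge> 0)"

datatype 'p locf = LTrue | LProp 'p | LNot "'p locf" | LOr "'p locf" "'p locf"

primrec lsat :: "'p set \<Rightarrow> 'p locf \<Rightarrow> bool" where
  "lsat P LTrue = True"
| "lsat P (LProp p) = (p \<in> P)"
| "lsat P (LNot \<psi>) = (\<not> lsat P \<psi>)"
| "lsat P (LOr \<psi>1 \<psi>2) = (lsat P \<psi>1 \<or> lsat P \<psi>2)"

type_synonym 'p sdom = "ereal \<times> ereal \<times> 'p locf"

definition Ldom :: "('l \<Rightarrow> 'l \<Rightarrow> ereal) \<Rightarrow> ('l \<Rightarrow> 'p set) \<Rightarrow> 'p sdom \<Rightarrow> 'l \<Rightarrow> 'l set" where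
  "Ldom d lab D l = (case D of (d1, d2, \<psi>) \<Rightarrow>
      {l'. d1 \<le> d l l' \<and> d l l' \<le> d2 \<and> lsat (lab l') \<psi>})"

datatype aop = OpMax | OpMin | OpSum | OpAvg

definition aggr :: "aop \<Rightarrow> real multiset \<Rightarrow> real" where
  "aggr op M = (case op of
      OpMax \<Rightarrow> Max (set_mset M)
    | OpMin \<Rightarrow> Min (set_mset M)
    | OpSum \<Rightarrow> sum_mset M
    | OpAvg \<Rightarrow> sum_mset M / real (size M))"

definition alpha :: "('l \<Rightarrow> 'l \<Rightarrow> ereal) \<Rightarrow> ('l \<Rightarrow> 'p set) \<Rightarrow> 'p sdom \<Rightarrow> 'x
    \<Rightarrow> (real \<Rightarrow> 'l \<Rightarrow> 'x \<Rightarrow> real) \<Rightarrow> real \<Rightarrow> 'l \<Rightarrow> real multiset" where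
  "alpha d lab D x \<omega> t l = image_mset (\<lambda>l'. \<omega> t l' x) (mset_set (Ldom d lab D l))"

text \<open>k-th largest element (k >= 1) of a multiset, counted with multiplicity.\<close>
definition kth_largest :: "nat \<Rightarrow> ('a::linorder) multiset \<Rightarrow> 'a" where
  "kth_largest k R = rev (sorted_list_of_multiset R) ! (k - 1)"

datatype ('x, 'p) sastl =
    Gt 'x real
  | Neg "('x, 'p) sastl"
  | Conj "('x, 'p) sastl" "('x, 'p) sastl"
  | Disj "('x, 'p) sastl" "('x, 'p) sastl"
  | Until "real set" "('x, 'p) sastl" "('x, 'p) sastl"
  | Agg aop "'p sdom" 'x real
  | Cnt aop "'p sdom" "('x, 'p) sastl" real

text \<open>Signals: omega t l x = pi_x(omega)[t,l]; only t >= 0 (the time domain) is relevant.\<close>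

primrec sat :: "('l::finite \<Rightarrow> 'l \<Rightarrow> ereal) \<Rightarrow> ('l \<Rightarrow> 'p set) \<Rightarrow> (real \<Rightarrow> 'l \<Rightarrow> 'x \<Rightarrow> real)
    \<Rightarrow> real \<Rightarrow> 'l \<Rightarrow> ('x, 'p) sastl \<Rightarrow> bool" where
  "sat d lab \<omega> t l (Gt x c) = (\<omega> t l x > c)"
| "sat d lab \<omega> t l (Neg \<phi>) = (\<not> sat d lab \<omega> t l \<phi>)"
| "sat d lab \<omega> t l (Conj \<phi>1 \<phi>2) = (sat d lab \<omega> t l \<phi>1 \<and> sat d lab \<omega> t l \<phi>2)"
| "sat d lab \<omega> t l (Disj \<phi>1 \<phi>2) = (sat d lab \<omega> t l \<phi>1 \<or> sat d lab \<omega> t l \<phi>2)"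
| "sat d lab \<omega> t l (Until I \<phi>1 \<phi>2) =
     (\<exists>t'. t' - t \<in> I \<and> t' \<ge> 0 \<and> sat d lab \<omega> t' l \<phi>2 \<and>
           (\<forall>t''. t < t'' \<and> t'' < t' \<longrightarrow> sat d lab \<omega> t'' l \<phi>1))"
| "sat d lab \<omega> t l (Agg op D x c) = (aggr op (alpha d lab D x \<omega> t l) > c)"
| "sat d lab \<omega> t l (Cnt op D \<phi> c) =
     (aggr op (image_mset (\<lambda>l'. if sat d lab \<omega> t l' \<phi> then 1 else 0) (mset_set (Ldom d lab D l))) > c)"

primrec rob :: "('l::finite \<Rightarrow> 'l \<Rightarrow> ereal) \<Rightarrow> ('l \<Rightarrow> 'p set) \<Rightarrow> (real \<Rightarrow> 'l \<Rightarrow> 'x \<Rightarrow> real)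
    \<Rightarrow> real \<Rightarrow> 'l \<Rightarrow> ('x, 'p) sastl \<Rightarrow> ereal" where
  "rob d lab \<omega> t l (Gt x c) = ereal (\<omega> t l x - c)"
| "rob d lab \<omega> t l (Neg \<phi>) = - rob d lab \<omega> t l \<phi>"
| "rob d lab \<omega> t l (Conj \<phi>1 \<phi>2) = min (rob d lab \<omega> t l \<phi>1) (rob d lab \<omega> t l \<phi>2)"
| "rob d lab \<omega> t l (Disj \<phi>1 \<phi>2) = max (rob d lab \<omega> t l \<phi>1) (rob d lab \<omega> t l \<phi>2)"
| "rob d lab \<omega> t l (Until I \<phi>1 \<phi>2) =
     (SUP t' \<in> {t'. t' - t \<in> I \<and> t' \<ge> 0}.
        min (rob d lab \<omega> t' l \<phi>2) (INF t'' \<in> {t<..<t'}. rob d lab \<omega> t'' l \<phi>1))"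
| "rob d lab \<omega> t l (Agg op D x c) =
     (case op of
        OpSum \<Rightarrow> ereal ((sum_mset (alpha d lab D x \<omega> t l) - c) / real (size (alpha d lab D x \<omega> t l)))
      | _ \<Rightarrow> ereal (aggr op (alpha d lab D x \<omega> t l) - c))"
| "rob d lab \<omega> t l (Cnt op D \<phi> c) =
     (let R = image_mset (\<lambda>l'. rob d lab \<omega> t l' \<phi>) (mset_set (Ldom d lab D l)) in
      case op of
        OpMax \<Rightarrow> Max (set_mset R)
      | OpMin \<Rightarrow> Min (set_mset R)
      | OpSum \<Rightarrow> kth_largest (nat \<lfloor>c\<rfloor> + 1) R
      | OpAvg \<Rightarrow> kth_largest (nat \<lfloor>c * real (card (Ldom d lab D l))\<rfloor> + 1) R)"

definition sdom_ok :: "('l \<Rightarrow> 'l \<Rightarrow> ereal) \<Rightarrow> ('l \<Rightarrow> 'p set) \<Rightarrow> 'p sdom \<Rightarrow> bool" where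
  "sdom_ok d lab D \<longleftrightarrow> (case D of (d1, d2, \<psi>) \<Rightarrow> 0 \<le> d1 \<and> d1 \<le> d2)
     \<and> (\<forall>l. Ldom d lab D l \<noteq> {})"

definition time_interval :: "real set \<Rightarrow> bool" where
  "time_interval I \<longleftrightarrow> I \<noteq> {} \<and> I \<subseteq> {0<..} \<and>
     (\<forall>a\<in>I. \<forall>b\<in>I. \<forall>s. a \<le> s \<and> s \<le> b \<longrightarrow> s \<in> I)"

primrec wf :: "('l \<Rightarrow> 'l \<Rightarrow> ereal) \<Rightarrow> ('l \<Rightarrow> 'p set) \<Rightarrow> ('x, 'p) sastl \<Rightarrow> bool" where
  "wf d lab (Gt x c) = True"
| "wf d lab (Neg \<phi>) = wf d lab \<phi>"
| "wf d lab (Conj \<phi>1 \<phi>2) = (wf d lab \<phi>1 \<and> wf d lab \<phi>2)"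
| "wf d lab (Disj \<phi>1 \<phi>2) = (wf d lab \<phi>1 \<and> wf d lab \<phi>2)"
| "wf d lab (Until I \<phi>1 \<phi>2) = (time_interval I \<and> wf d lab \<phi>1 \<and> wf d lab \<phi>2)"
| "wf d lab (Agg op D x c) = sdom_ok d lab D"
| "wf d lab (Cnt op D \<phi> c) = (sdom_ok d lab D \<and> wf d lab \<phi> \<and>
     (if op = OpSum then 0 \<le> c \<and> (\<forall>l. c < real (card (Ldom d lab D l)))
      else 0 \<le> c \<and> c < 1))"

definition sig_dist :: "(real \<Rightarrow> 'l \<Rightarrow> 'x \<Rightarrow> real) \<Rightarrow> (real \<Rightarrow> 'l \<Rightarrow> 'x \<Rightarrow> real) \<Rightarrow> ereal" where
  "sig_dist \<omega> \<omega>' = (SUP p \<in> {t0. t0 \<ge> 0} \<times> UNIV \<times> UNIV.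
      ereal \<bar>\<omega> (fst p) (fst (snd p)) (snd (snd p)) - \<omega>' (fst p) (fst (snd p)) (snd (snd p))\<bar>)"

end

theory Submission
  imports Defs
begin


lemma kth_mset:
  fixes M :: "'a::linorder multiset"
  assumes k: "1 \<le> k" "k \<le> size M"
  shows "k \<le> size (filter_mset (\<lambda>x. kth_largest k M \<le> x) M)
     \<and> size (filter_mset (\<lambda>x. kth_largest k M < x) M) < k"
proof -
  define xs where "xs = sorted_list_of_multiset M"
  have s: "sorted xs" and m: "mset xs = M" by (auto simp: xs_def)
  define n where "n = length xs"
  have n: "n = size M" using m n_def by (metis size_mset)
  define j where "j = n - k"
  have v: "kth_largest k M = xs ! j"
    unfolding kth_largest_def xs_def[symmetric] j_def n_def using k n n_def
    by (simp add: rev_nth)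
  have jn: "j < n" using k n j_def by simp
  have sz: "\<And>P. size (filter_mset P M) = card {i. i < n \<and> P (xs ! i)}"
    by (metis m mset_filter size_mset length_filter_conv_card n_def)
  have 1: "{j..<n} \<subseteq> {i. i < n \<and> xs ! j \<le> xs ! i}"
    using s by (auto simp: n_def intro: sorted_nth_mono)
  have 2: "{i. i < n \<and> xs ! j < xs ! i} \<subseteq> {Suc j..<n}"
  proof
    fix i assume "i \<in> {i. i < n \<and> xs ! j < xs ! i}"
    then have "i < n" "xs ! j < xs ! i" by auto
    moreover have "i \<le> j \<Longrightarrow> xs ! i \<le> xs ! j" using s jn n_def by (simp add: sorted_nth_mono)
    ultimately show "i \<in> {Suc j..<n}" by force
  qed
  have "k \<le> card {i. i < n \<and> xs ! j \<le> xs ! i}"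
    using card_mono[OF _ 1] j_def k n by simp
  moreover have "card {i. i < n \<and> xs ! j < xs ! i} < k"
    using card_mono[OF _ 2] j_def k n by simp
  ultimately show ?thesis by (simp add: sz v)
qed

lemma kth_set:
  fixes f :: "'b \<Rightarrow> 'a::linorder"
  assumes "finite S" "1 \<le> k" "k \<le> card S"
  shows "k \<le> card {x\<in>S. kth_largest k (image_mset f (mset_set S)) \<le> f x}
     \<and> card {x\<in>S. kth_largest k (image_mset f (mset_set S)) < f x} < k"
  using kth_mset[of k "image_mset f (mset_set S)"] assms
  by (simp add: filter_mset_image_mset filter_mset_mset_set)

lemma kth_lip:
  fixes f g :: "'b \<Rightarrow> 'a::{linorder,ordered_ab_semigroup_add}"
  assumes "finite S" "1 \<le> k" "k \<le> card S" and fg: "\<And>x. x \<in> S \<Longrightarrow> f x \<le> g x + \<delta>"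
  shows "kth_largest k (image_mset f (mset_set S)) \<le> kth_largest k (image_mset g (mset_set S)) + \<delta>"
proof (rule ccontr)
  let ?vf = "kth_largest k (image_mset f (mset_set S))"
  let ?vg = "kth_largest k (image_mset g (mset_set S))"
  assume "\<not> ?thesis"
  then have lt: "?vg + \<delta> < ?vf" by simp
  have "{x\<in>S. ?vf \<le> f x} \<subseteq> {x\<in>S. ?vg < g x}"
  proof clarify
    fix x assume x: "x \<in> S" "?vf \<le> f x"
    show "?vg < g x"
    proof (rule ccontr)
      assume "\<not> ?vg < g x"
      then have "g x + \<delta> \<le> ?vg + \<delta>" by (simp add: add_right_mono)
      with lt x fg[OF x(1)] show False by (meson leD order.trans)
    qed
  qed
  then have "card {x\<in>S. ?vf \<le> f x} \<le> card {x\<in>S. ?vg < g x}"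
    using assms(1) by (intro card_mono) auto
  with kth_set[OF assms(1-3), of f] kth_set[OF assms(1-3), of g] show False by linarith
qed

lemma max_lip:
  fixes f g :: "'b \<Rightarrow> 'a::{linorder,ordered_ab_semigroup_add}"
  assumes "finite S" "S \<noteq> {}" and fg: "\<And>x. x \<in> S \<Longrightarrow> f x \<le> g x + \<delta>"
  shows "Max (f ` S) \<le> Max (g ` S) + \<delta>"
proof -
  have "Max (f ` S) \<in> f ` S" using assms by simp
  then obtain x where x: "x \<in> S" "Max (f ` S) = f x" by auto
  have "g x \<le> Max (g ` S)" using assms x by auto
  then show ?thesis using x fg[OF x(1)] by (metis add_right_mono order.trans)
qed

lemma min_lip:
  fixes f g :: "'b \<Rightarrow> 'a::{linorder,ordered_ab_semigroup_add}"
  assumes "finite S" "S \<noteq> {}" and fg: "\<And>x. x \<in> S \<Longrightarrow> f x \<le> g x + \<delta>"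
  shows "Min (f ` S) \<le> Min (g ` S) + \<delta>"
proof -
  have "Min (g ` S) \<in> g ` S" using assms by simp
  then obtain x where x: "x \<in> S" "Min (g ` S) = g x" by auto
  have "Min (f ` S) \<le> f x" using assms x by auto
  then show ?thesis using x fg[OF x(1)] by (metis order.trans)
qed



lemma ind_sum: "finite S \<Longrightarrow> (\<Sum>x\<in>S. if P x then 1 else 0::real) = real (card {x\<in>S. P x})"
  by (simp add: sum.If_cases Int_def)

lemma ind_max:
  assumes "finite S" "S \<noteq> {}" "0 \<le> c" "c < 1"
  shows "(c < Max ((\<lambda>x. if P x then 1 else (0::real)) ` S)) \<longleftrightarrow> (\<exists>x\<in>S. P x)"
proof
  assume "c < Max ((\<lambda>x. if P x then 1 else (0::real)) ` S)"
  moreover have "Max ((\<lambda>x. if P x then 1 else (0::real)) ` S) \<in> (\<lambda>x. if P x then 1 else (0::real)) ` S"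
    using assms by (intro Max_in) auto
  ultimately show "\<exists>x\<in>S. P x" using assms by (auto split: if_splits)
next
  assume "\<exists>x\<in>S. P x"
  then obtain x where "x \<in> S" "P x" by auto
  then have "1 \<le> Max ((\<lambda>x. if P x then 1 else (0::real)) ` S)"
    using assms by (intro Max_ge_iff[THEN iffD2]) auto
  then show "c < Max ((\<lambda>x. if P x then 1 else (0::real)) ` S)" using assms by linarith
qed

lemma ind_min:
  assumes "finite S" "S \<noteq> {}" "0 \<le> c" "c < 1"
  shows "(c < Min ((\<lambda>x. if P x then 1 else (0::real)) ` S)) \<longleftrightarrow> (\<forall>x\<in>S. P x)"
proof
  assume a: "c < Min ((\<lambda>x. if P x then 1 else (0::real)) ` S)"
  show "\<forall>x\<in>S. P x"
  proof
    fix x assume x: "x \<in> S"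
    have "Min ((\<lambda>x. if P x then 1 else (0::real)) ` S) \<le> (if P x then 1 else 0)"
      using assms x by simp
    then show "P x" using a assms by (auto split: if_splits)
  qed
next
  assume "\<forall>x\<in>S. P x"
  then have "(\<lambda>x. if P x then 1 else (0::real)) ` S = {1}" using assms by auto
  then show "c < Min ((\<lambda>x. if P x then 1 else (0::real)) ` S)" using assms by simp
qed



lemma sound:
  fixes d :: "'l::finite \<Rightarrow> 'l \<Rightarrow> ereal" and \<phi> :: "('x, 'p) sastl"
  assumes "wf d lab \<phi>"
  shows "(0 < rob d lab \<omega> t l \<phi> \<longrightarrow> sat d lab \<omega> t l \<phi>) \<and>
         (rob d lab \<omega> t l \<phi> < 0 \<longrightarrow> \<not> sat d lab \<omega> t l \<phi>)"
  using assms
proof (induction \<phi> arbitrary: t l)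
  case (Gt x c)
  then show ?case by simp
next
  case (Neg \<phi>)
  then show ?case by (auto simp: ereal_uminus_less_reorder ereal_less_uminus_reorder)
next
  case (Conj \<phi>1 \<phi>2)
  then show ?case by (auto simp: min_less_iff_disj)
next
  case (Disj \<phi>1 \<phi>2)
  then show ?case by (auto simp: less_max_iff_disj)
next
  case (Until I \<phi>1 \<phi>2)
  let ?T = "{t'. t' - t \<in> I \<and> t' \<ge> 0}"
  let ?g = "\<lambda>t'. min (rob d lab \<omega> t' l \<phi>2) (INF t'' \<in> {t<..<t'}. rob d lab \<omega> t'' l \<phi>1)"
  have IH1: "\<And>t l. (0 < rob d lab \<omega> t l \<phi>1 \<longrightarrow> sat d lab \<omega> t l \<phi>1) \<and>
         (rob d lab \<omega> t l \<phi>1 < 0 \<longrightarrow> \<not> sat d lab \<omega> t l \<phi>1)" using Until by simp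
  have IH2: "\<And>t l. (0 < rob d lab \<omega> t l \<phi>2 \<longrightarrow> sat d lab \<omega> t l \<phi>2) \<and>
         (rob d lab \<omega> t l \<phi>2 < 0 \<longrightarrow> \<not> sat d lab \<omega> t l \<phi>2)" using Until by simp
  show ?case
  proof (intro conjI impI)
    assume "0 < rob d lab \<omega> t l (Until I \<phi>1 \<phi>2)"
    then have "0 < (SUP t' \<in> ?T. ?g t')" by simp
    then obtain t' where t': "t' \<in> ?T" "0 < ?g t'" by (auto simp: less_SUP_iff)
    then have a: "0 < rob d lab \<omega> t' l \<phi>2" and b: "0 < (INF t'' \<in> {t<..<t'}. rob d lab \<omega> t'' l \<phi>1)"
      by auto
    have "\<forall>t''. t < t'' \<and> t'' < t' \<longrightarrow> sat d lab \<omega> t'' l \<phi>1"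
    proof (intro allI impI)
      fix t'' assume "t < t'' \<and> t'' < t'"
      then have "(INF t'' \<in> {t<..<t'}. rob d lab \<omega> t'' l \<phi>1) \<le> rob d lab \<omega> t'' l \<phi>1"
        by (intro INF_lower) auto
      with b IH1 show "sat d lab \<omega> t'' l \<phi>1" by (meson less_le_trans)
    qed
    with t' a IH2 show "sat d lab \<omega> t l (Until I \<phi>1 \<phi>2)" by auto
  next
    assume neg: "rob d lab \<omega> t l (Until I \<phi>1 \<phi>2) < 0"
    show "\<not> sat d lab \<omega> t l (Until I \<phi>1 \<phi>2)"
    proof
      assume "sat d lab \<omega> t l (Until I \<phi>1 \<phi>2)"
      then obtain t' where t': "t' \<in> ?T" "sat d lab \<omega> t' l \<phi>2"
        "\<forall>t''. t < t'' \<and> t'' < t' \<longrightarrow> sat d lab \<omega> t'' l \<phi>1" by auto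
      have "0 \<le> rob d lab \<omega> t' l \<phi>2" using IH2 t' by (meson not_le)
      moreover have "0 \<le> (INF t'' \<in> {t<..<t'}. rob d lab \<omega> t'' l \<phi>1)"
        using IH1 t' by (intro INF_greatest) (meson greaterThanLessThan_iff not_le)
      ultimately have g0: "0 \<le> ?g t'" by simp
      have "?g t' \<le> (SUP t' \<in> ?T. ?g t')" using t' by (intro SUP_upper) auto
      with g0 have "0 \<le> (SUP t' \<in> ?T. ?g t')" by (rule order.trans)
      then show False using neg by simp
    qed
  qed
next
  case (Agg op D x c)
  let ?S = "Ldom d lab D l"
  have S: "finite ?S" "?S \<noteq> {}" using Agg by (auto simp: sdom_ok_def)
  then have cp: "0 < card ?S" by (simp add: card_gt_0_iff)
  show ?case
  proof (cases op)
    case OpSum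
    then show ?thesis using cp
      by (simp add: aggr_def alpha_def divide_less_0_iff zero_less_divide_iff)
  next
    case OpAvg
    then show ?thesis using cp by (simp add: aggr_def alpha_def)
  qed (auto simp: aggr_def alpha_def)
next
  case (Cnt op D \<phi> c)
  let ?S = "Ldom d lab D l"
  let ?r = "\<lambda>l'. rob d lab \<omega> t l' \<phi>"
  let ?P = "\<lambda>l'. sat d lab \<omega> t l' \<phi>"
  have S: "finite ?S" "?S \<noteq> {}" using Cnt by (auto simp: sdom_ok_def)
  then have cp: "0 < card ?S" by (simp add: card_gt_0_iff)
  have IH: "\<And>l'. (0 < ?r l' \<longrightarrow> ?P l') \<and> (?r l' < 0 \<longrightarrow> \<not> ?P l')" using Cnt by simp
  have kth: "(0 < kth_largest k (image_mset ?r (mset_set ?S)) \<longrightarrow> k \<le> card {x\<in>?S. ?P x}) \<and>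
             (kth_largest k (image_mset ?r (mset_set ?S)) < 0 \<longrightarrow> card {x\<in>?S. ?P x} < k)"
    if k: "1 \<le> k" "k \<le> card ?S" for k
  proof (intro conjI impI)
    let ?v = "kth_largest k (image_mset ?r (mset_set ?S))"
    assume "0 < ?v"
    have "{x\<in>?S. ?v \<le> ?r x} \<subseteq> {x\<in>?S. ?P x}" using IH \<open>0 < ?v\<close> by (auto dest: less_le_trans)
    then have "card {x\<in>?S. ?v \<le> ?r x} \<le> card {x\<in>?S. ?P x}" using S by (intro card_mono) auto
    with kth_set[OF S(1) k, of ?r] show "k \<le> card {x\<in>?S. ?P x}" by linarith
  next
    let ?v = "kth_largest k (image_mset ?r (mset_set ?S))"
    assume "?v < 0"
    have "{x\<in>?S. ?P x} \<subseteq> {x\<in>?S. ?v < ?r x}" using IH \<open>?v < 0\<close>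
      by (auto, meson less_le_trans not_le)
    then have "card {x\<in>?S. ?P x} \<le> card {x\<in>?S. ?v < ?r x}" using S by (intro card_mono) auto
    with kth_set[OF S(1) k, of ?r] show "card {x\<in>?S. ?P x} < k" by linarith
  qed
  show ?case
  proof (cases op)
    case OpMax
    have c: "0 \<le> c" "c < 1" using Cnt OpMax by auto
    have mi: "Max (?r ` ?S) \<in> ?r ` ?S" using S by (intro Max_in) auto
    have mg: "\<And>x. x \<in> ?S \<Longrightarrow> ?r x \<le> Max (?r ` ?S)" using S by simp
    have sat_eq: "sat d lab \<omega> t l (Cnt op D \<phi> c) \<longleftrightarrow> (\<exists>x\<in>?S. ?P x)"
      using ind_max[OF S c, of ?P] OpMax S by (simp only: sat.simps aggr_def aop.case set_image_mset finite_set_mset_mset_set)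
    have rob_eq: "rob d lab \<omega> t l (Cnt op D \<phi> c) = Max (?r ` ?S)" using OpMax S by simp
    show ?thesis unfolding sat_eq rob_eq
    proof (intro conjI impI)
      assume "0 < Max (?r ` ?S)"
      with mi obtain x where "x \<in> ?S" "0 < ?r x" by auto
      with IH show "\<exists>x\<in>?S. ?P x" by blast
    next
      assume "Max (?r ` ?S) < 0"
      with mg have "\<And>x. x \<in> ?S \<Longrightarrow> ?r x < 0" by (meson le_less_trans)
      with IH show "\<not> (\<exists>x\<in>?S. ?P x)" by blast
    qed
  next
    case OpMin
    have c: "0 \<le> c" "c < 1" using Cnt OpMin by auto
    have mi: "Min (?r ` ?S) \<in> ?r ` ?S" using S by (intro Min_in) auto
    have mg: "\<And>x. x \<in> ?S \<Longrightarrow> Min (?r ` ?S) \<le> ?r x" using S by simp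
    have sat_eq: "sat d lab \<omega> t l (Cnt op D \<phi> c) \<longleftrightarrow> (\<forall>x\<in>?S. ?P x)"
      using ind_min[OF S c, of ?P] OpMin S by (simp only: sat.simps aggr_def aop.case set_image_mset finite_set_mset_mset_set)
    have rob_eq: "rob d lab \<omega> t l (Cnt op D \<phi> c) = Min (?r ` ?S)" using OpMin S by simp
    show ?thesis unfolding sat_eq rob_eq
    proof (intro conjI impI)
      assume "0 < Min (?r ` ?S)"
      with mg have "\<And>x. x \<in> ?S \<Longrightarrow> 0 < ?r x" by (meson less_le_trans)
      with IH show "\<forall>x\<in>?S. ?P x" by blast
    next
      assume "Min (?r ` ?S) < 0"
      with mi obtain x where "x \<in> ?S" "?r x < 0" by auto
      with IH show "\<not> (\<forall>x\<in>?S. ?P x)" by blast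
    qed
  next
    case OpSum
    have c: "0 \<le> c" "c < real (card ?S)" using Cnt OpSum by auto
    define k where "k = nat \<lfloor>c\<rfloor> + 1"
    have k: "1 \<le> k" "k \<le> card ?S" using c unfolding k_def by linarith+
    have ck: "c < real k" "real (k - 1) \<le> c" using c unfolding k_def by linarith+
    have sat_eq: "sat d lab \<omega> t l (Cnt op D \<phi> c) \<longleftrightarrow> c < real (card {x\<in>?S. ?P x})"
      using OpSum S by (simp add: aggr_def sum_unfold_sum_mset[symmetric] ind_sum)
    have rob_eq: "rob d lab \<omega> t l (Cnt op D \<phi> c) = kth_largest k (image_mset ?r (mset_set ?S))"
      using OpSum by (simp add: k_def)
    show ?thesis unfolding sat_eq rob_eq using kth[OF k] ck by fastforce
  next
    case OpAvg
    have c: "0 \<le> c" "c < 1" using Cnt OpAvg by auto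
    define k where "k = nat \<lfloor>c * real (card ?S)\<rfloor> + 1"
    have cn: "0 \<le> c * real (card ?S)" "c * real (card ?S) < real (card ?S)" using c cp by auto
    have k: "1 \<le> k" "k \<le> card ?S" using cn unfolding k_def by linarith+
    have ck: "c * real (card ?S) < real k" "real (k - 1) \<le> c * real (card ?S)" using cn unfolding k_def by linarith+
    have sat_eq: "sat d lab \<omega> t l (Cnt op D \<phi> c) \<longleftrightarrow> c * real (card ?S) < real (card {x\<in>?S. ?P x})"
      using OpAvg S cp by (simp add: aggr_def sum_unfold_sum_mset[symmetric] ind_sum pos_less_divide_eq)
    have rob_eq: "rob d lab \<omega> t l (Cnt op D \<phi> c) = kth_largest k (image_mset ?r (mset_set ?S))"
      using OpAvg by (simp add: k_def)
    show ?thesis unfolding sat_eq rob_eq using kth[OF k] ck by fastforce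
  qed
qed



lemma ereal_neg_lip: "(b::ereal) \<le> a + ereal \<delta> \<Longrightarrow> - a \<le> - b + ereal \<delta>"
  by (cases a; cases b) auto

lemma ereal_le_add_iff: "(a::ereal) \<le> b + ereal \<delta> \<longleftrightarrow> a - ereal \<delta> \<le> b"
  by (cases a; cases b) auto

lemma min_lip2:
  fixes a1 a2 b1 b2 :: "'a::{linorder,ordered_ab_semigroup_add}"
  shows "a1 \<le> b1 + \<delta> \<Longrightarrow> a2 \<le> b2 + \<delta> \<Longrightarrow> min a1 a2 \<le> min b1 b2 + \<delta>"
  by (cases "b1 \<le> b2") (auto simp: min_def dest: order.trans)

lemma max_lip2:
  fixes a1 a2 b1 b2 :: "'a::{linorder,ordered_ab_semigroup_add}"
  shows "a1 \<le> b1 + \<delta> \<Longrightarrow> a2 \<le> b2 + \<delta> \<Longrightarrow> max a1 a2 \<le> max b1 b2 + \<delta>"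
proof -
  assume h: "a1 \<le> b1 + \<delta>" "a2 \<le> b2 + \<delta>"
  have "b1 + \<delta> \<le> max b1 b2 + \<delta>" "b2 + \<delta> \<le> max b1 b2 + \<delta>" by (simp_all add: add_right_mono)
  with h show ?thesis by (auto dest: order.trans)
qed

lemma sup_lip:
  fixes f g :: "'b \<Rightarrow> ereal"
  assumes "\<And>i. i \<in> A \<Longrightarrow> f i \<le> g i + ereal \<delta>"
  shows "(SUP i\<in>A. f i) \<le> (SUP i\<in>A. g i) + ereal \<delta>"
proof (rule SUP_least)
  fix i assume i: "i \<in> A"
  have "g i \<le> (SUP i\<in>A. g i)" using i by (rule SUP_upper)
  then have "g i + ereal \<delta> \<le> (SUP i\<in>A. g i) + ereal \<delta>" by (rule add_right_mono)
  with assms[OF i] show "f i \<le> (SUP i\<in>A. g i) + ereal \<delta>" by (rule order.trans)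
qed

lemma inf_lip:
  fixes f g :: "'b \<Rightarrow> ereal"
  assumes "\<And>i. i \<in> A \<Longrightarrow> f i \<le> g i + ereal \<delta>"
  shows "(INF i\<in>A. f i) \<le> (INF i\<in>A. g i) + ereal \<delta>"
  unfolding ereal_le_add_iff
proof (rule INF_greatest)
  fix i assume i: "i \<in> A"
  have "(INF i\<in>A. f i) \<le> f i" using i by (rule INF_lower)
  with assms[OF i] have "(INF i\<in>A. f i) \<le> g i + ereal \<delta>" by (rule order.trans[rotated])
  then show "(INF i\<in>A. f i) - ereal \<delta> \<le> g i" by (simp add: ereal_le_add_iff)
qed

lemma sum_lip:
  fixes f g :: "'b \<Rightarrow> real"
  assumes "finite S" "\<And>x. x \<in> S \<Longrightarrow> f x \<le> g x + \<delta>"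
  shows "sum f S \<le> sum g S + real (card S) * \<delta>"
proof -
  have "sum f S \<le> sum (\<lambda>x. g x + \<delta>) S" using assms by (intro sum_mono) auto
  also have "\<dots> = sum g S + real (card S) * \<delta>" by (simp add: sum.distrib)
  finally show ?thesis .
qed



lemma div_lip:
  fixes A B n \<delta> :: real
  assumes "0 < n" "A \<le> B + n * \<delta>"
  shows "A / n \<le> B / n + \<delta>"
proof -
  have "A / n \<le> (B + n * \<delta>) / n" using assms by (simp add: divide_right_mono)
  also have "\<dots> = B / n + \<delta>" using assms by (simp add: add_divide_distrib)
  finally show ?thesis .
qed

lemma lip:
  fixes d :: "'l::finite \<Rightarrow> 'l \<Rightarrow> ereal" and \<phi> :: "('x, 'p) sastl"
    and \<omega> \<omega>' :: "real \<Rightarrow> 'l \<Rightarrow> 'x \<Rightarrow> real"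
  assumes "wf d lab \<phi>" "0 \<le> t"
    and close: "\<And>t l x. 0 \<le> t \<Longrightarrow> \<bar>\<omega> t l x - \<omega>' t l x\<bar> \<le> \<delta>"
  shows "rob d lab \<omega> t l \<phi> \<le> rob d lab \<omega>' t l \<phi> + ereal \<delta> \<and>
         rob d lab \<omega>' t l \<phi> \<le> rob d lab \<omega> t l \<phi> + ereal \<delta>"
  using assms(1,2)
proof (induction \<phi> arbitrary: t l)
  case (Gt x c)
  then show ?case using close[of t l x] by (simp add: abs_le_iff)
next
  case (Neg \<phi>)
  then show ?case by (simp add: ereal_neg_lip)
next
  case (Conj \<phi>1 \<phi>2)
  then show ?case by (simp add: min_lip2)
next
  case (Disj \<phi>1 \<phi>2)
  then have "rob d lab \<omega> t l \<phi>1 \<le> rob d lab \<omega>' t l \<phi>1 + ereal \<delta> \<and>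
         rob d lab \<omega>' t l \<phi>1 \<le> rob d lab \<omega> t l \<phi>1 + ereal \<delta>"
    "rob d lab \<omega> t l \<phi>2 \<le> rob d lab \<omega>' t l \<phi>2 + ereal \<delta> \<and>
         rob d lab \<omega>' t l \<phi>2 \<le> rob d lab \<omega> t l \<phi>2 + ereal \<delta>" by simp_all
  then show ?case by (simp only: rob.simps) (blast intro: max_lip2)
next
  case (Until I \<phi>1 \<phi>2)
  have IH1: "\<And>t l. 0 \<le> t \<Longrightarrow> rob d lab \<omega> t l \<phi>1 \<le> rob d lab \<omega>' t l \<phi>1 + ereal \<delta> \<and>
         rob d lab \<omega>' t l \<phi>1 \<le> rob d lab \<omega> t l \<phi>1 + ereal \<delta>" using Until by simp
  have IH2: "\<And>t l. 0 \<le> t \<Longrightarrow> rob d lab \<omega> t l \<phi>2 \<le> rob d lab \<omega>' t l \<phi>2 + ereal \<delta> \<and>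
         rob d lab \<omega>' t l \<phi>2 \<le> rob d lab \<omega> t l \<phi>2 + ereal \<delta>" using Until by simp
  have tt: "0 \<le> t" by fact
  show ?case
    apply (simp only: rob.simps)
    apply (intro conjI sup_lip min_lip2 inf_lip)
    using IH1 IH2 tt by auto
next
  case (Agg op D x c)
  let ?S = "Ldom d lab D l"
  have S: "finite ?S" "?S \<noteq> {}" using Agg by (auto simp: sdom_ok_def)
  then have cp: "0 < card ?S" by (simp add: card_gt_0_iff)
  let ?f = "\<lambda>l'. \<omega> t l' x" and ?g = "\<lambda>l'. \<omega>' t l' x"
  have fg: "\<And>l'. ?f l' \<le> ?g l' + \<delta>" "\<And>l'. ?g l' \<le> ?f l' + \<delta>"
    using close[OF Agg(2)] by (smt (verit))+
  show ?case
  proof (cases op)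
    case OpMax
    then show ?thesis using max_lip[OF S, of ?f ?g \<delta>] max_lip[OF S, of ?g ?f \<delta>] fg
      by (simp add: aggr_def alpha_def)
  next
    case OpMin
    then show ?thesis using min_lip[OF S, of ?f ?g \<delta>] min_lip[OF S, of ?g ?f \<delta>] fg
      by (simp add: aggr_def alpha_def)
  next
    case OpSum
    have a: "(sum ?f ?S - c) / real (card ?S) \<le> (sum ?g ?S - c) / real (card ?S) + \<delta>"
      if "sum ?f ?S \<le> sum ?g ?S + real (card ?S) * \<delta>"
      using that cp div_lip[of "real (card ?S)" "sum ?f ?S - c" "sum ?g ?S - c" \<delta>] by simp
    have b: "(sum ?g ?S - c) / real (card ?S) \<le> (sum ?f ?S - c) / real (card ?S) + \<delta>"
      if "sum ?g ?S \<le> sum ?f ?S + real (card ?S) * \<delta>"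
      using that cp div_lip[of "real (card ?S)" "sum ?g ?S - c" "sum ?f ?S - c" \<delta>] by simp
    show ?thesis using OpSum a b sum_lip[OF S(1), of ?f ?g \<delta>] sum_lip[OF S(1), of ?g ?f \<delta>] fg
      by (simp add: alpha_def sum_unfold_sum_mset[symmetric])
  next
    case OpAvg
    have a: "sum ?f ?S / real (card ?S) - c \<le> sum ?g ?S / real (card ?S) - c + \<delta>"
      if "sum ?f ?S \<le> sum ?g ?S + real (card ?S) * \<delta>"
      using that cp div_lip[of "real (card ?S)" "sum ?f ?S" "sum ?g ?S" \<delta>] by simp
    have b: "sum ?g ?S / real (card ?S) - c \<le> sum ?f ?S / real (card ?S) - c + \<delta>"
      if "sum ?g ?S \<le> sum ?f ?S + real (card ?S) * \<delta>"
      using that cp div_lip[of "real (card ?S)" "sum ?g ?S" "sum ?f ?S" \<delta>] by simp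
    show ?thesis using OpAvg a b sum_lip[OF S(1), of ?f ?g \<delta>] sum_lip[OF S(1), of ?g ?f \<delta>] fg
      by (simp add: aggr_def alpha_def sum_unfold_sum_mset[symmetric])
  qed
next
  case (Cnt op D \<phi> c)
  let ?S = "Ldom d lab D l"
  have S: "finite ?S" "?S \<noteq> {}" using Cnt by (auto simp: sdom_ok_def)
  then have cp: "0 < card ?S" by (simp add: card_gt_0_iff)
  let ?f = "\<lambda>l'. rob d lab \<omega> t l' \<phi>" and ?g = "\<lambda>l'. rob d lab \<omega>' t l' \<phi>"
  have fg: "\<And>l'. ?f l' \<le> ?g l' + ereal \<delta>" "\<And>l'. ?g l' \<le> ?f l' + ereal \<delta>"
    using Cnt by auto
  show ?case
  proof (cases op)
    case OpMax
    then show ?thesis using max_lip[OF S, of ?f ?g "ereal \<delta>"] max_lip[OF S, of ?g ?f "ereal \<delta>"] fg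
      by simp
  next
    case OpMin
    then show ?thesis using min_lip[OF S, of ?f ?g "ereal \<delta>"] min_lip[OF S, of ?g ?f "ereal \<delta>"] fg
      by simp
  next
    case OpSum
    have c: "0 \<le> c" "c < real (card ?S)" using Cnt OpSum by auto
    define k where "k = nat \<lfloor>c\<rfloor> + 1"
    have k: "1 \<le> k" "k \<le> card ?S" using c unfolding k_def by linarith+
    show ?thesis using OpSum kth_lip[OF S(1) k, of ?f ?g "ereal \<delta>"] kth_lip[OF S(1) k, of ?g ?f "ereal \<delta>"] fg
      by (simp add: k_def)
  next
    case OpAvg
    have c: "0 \<le> c" "c < 1" using Cnt OpAvg by auto
    define k where "k = nat \<lfloor>c * real (card ?S)\<rfloor> + 1"
    have cn: "0 \<le> c * real (card ?S)" "c * real (card ?S) < real (card ?S)" using c cp by auto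
    have k: "1 \<le> k" "k \<le> card ?S" using cn unfolding k_def by linarith+
    show ?thesis using OpAvg kth_lip[OF S(1) k, of ?f ?g "ereal \<delta>"] kth_lip[OF S(1) k, of ?g ?f "ereal \<delta>"] fg
      by (simp add: k_def)
  qed
qed



theorem theorem2:
  fixes E :: "('l::finite) set set" and eta :: "'l set \<Rightarrow> real"
    and lab :: "'l \<Rightarrow> 'p set"
    and \<phi> :: "('x::finite, 'p) sastl"
    and \<omega> \<omega>' :: "real \<Rightarrow> 'l \<Rightarrow> 'x \<Rightarrow> real"
    and t :: real and l :: 'l
  assumes "undirected_weighted_graph E eta"
    and "wf (graph_dist E eta) lab \<phi>"
    and "t \<ge> 0"
    and "sat (graph_dist E eta) lab \<omega> t l \<phi>"
    and "sig_dist \<omega> \<omega>' < rob (graph_dist E eta) lab \<omega> t l \<phi>"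
  shows "sat (graph_dist E eta) lab \<omega>' t l \<phi>"
proof -
  let ?d = "graph_dist E eta"
  let ?D = "sig_dist \<omega> \<omega>'"
  have up: "ereal \<bar>\<omega> t0 l0 x - \<omega>' t0 l0 x\<bar> \<le> ?D" if "0 \<le> t0" for t0 l0 x
    unfolding sig_dist_def
    by (rule SUP_upper2[where i="(t0, l0, x)"]) (use that in auto)
  have D1: "ereal \<bar>\<omega> 0 l undefined - \<omega>' 0 l undefined\<bar> \<le> ?D" using up[of 0] by simp
  have D2: "0 \<le> ereal \<bar>\<omega> 0 l undefined - \<omega>' 0 l undefined\<bar>" by simp
  have D0: "0 \<le> ?D" using D2 D1 by (rule order.trans)
  have Dfin: "?D \<noteq> \<infinity>" using assms(5) by auto
  obtain \<delta> where \<delta>: "?D = ereal \<delta>" using D0 Dfin by (cases ?D) auto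
  have close: "\<bar>\<omega> t0 l0 x - \<omega>' t0 l0 x\<bar> \<le> \<delta>" if "0 \<le> t0" for t0 l0 x
    using up[OF that, of l0 x] \<delta> by simp
  have L: "rob ?d lab \<omega> t l \<phi> \<le> rob ?d lab \<omega>' t l \<phi> + ereal \<delta>"
    using lip[OF assms(2,3), of \<omega> \<omega>' \<delta> l] close by blast
  have "0 < rob ?d lab \<omega>' t l \<phi>"
  proof (rule ccontr)
    assume "\<not> 0 < rob ?d lab \<omega>' t l \<phi>"
    then have "rob ?d lab \<omega>' t l \<phi> + ereal \<delta> \<le> 0 + ereal \<delta>" by (intro add_right_mono) simp
    with L have "rob ?d lab \<omega> t l \<phi> \<le> ereal \<delta>" by simp
    with assms(5) \<delta> show False by simp
  qed
  then show ?thesis using sound[OF assms(2)] by blast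
qed

end
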